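(* Let $\phi=(\phi_i)_{i\ge1}$ be a sequence of real numbers and define $\mathcal{H}_0^{\phi}=1$ and, for $n\ge0$, $\mathcal{H}_{n+1}^{\phi}(x)=2x\mathcal{H}_n^{\phi}(x)-(\mathcal{H}_n^{\phi})'(x)+\phi_{n+1}\mathcal{H}_n^{\phi}(x)$ (so $\mathcal{H}_n^\phi$ has degree $n$ and depends only on $\phi_1,\dots,\phi_n$). For $l\ge1$ let $\phi^{\{l\}}$ be the sequence obtained from $\phi$ by removing $\phi_l$ ($\phi^{\{l\}}_i=\phi_i$ for $i<l$, $\phi^{\{l\}}_i=\phi_{i+1}$ for $i\ge l$), and for a real $M$ let $\phi^{l,M}$ be the sequence $\phi^{l,M}_i=\phi_i+M\delta_{i,l}$. Then: (1) For every $n\ge0$, $\mathcal{H}_n^\phi$ has $n$ real and simple zeros, and for every $l\ge1$ the zeros of $\mathcal{H}_{n+1}^\phi$ interlace the zeros of $\mathcal{H}_n^{\phi^{\{l\}}}$. (2) Let $\zeta_k(n,\phi)$, $1\le k\le n$, denote the $k$-th zero of $\mathcal{H}_n^\phi$ in increasing order. If $\phi$ and $\rho$ are real sequences with $\phi_j\le\rho_j$ for all $j\ge1$, then $\zeta_k(n,\rho)\le\zeta_k(n,\phi)$ for all $1\le k\le n$. (3) Let $l\le n$ be positive integers and $M\neq0$ real. If $M>0$, the zeros of $\mathcal{H}_n^{\phi^{l,M}}$ interlace the zeros of $\mathcal{H}_n^\phi$; if $M<0$, the zeros of $\mathcal{H}_n^{\phi}$ interlace the zeros of $\mathcal{H}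_n^{\phi^{l,M}}$.
   Context: $\delta_{i,l}$ is the Kronecker delta. Interlacing: given two finite sets $U,V$ of real numbers, $U$ (strictly) interlaces $V$ if $\min U<\min V$ and between any two consecutive elements of either of the two sets there is an element of the other; "the zeros of $p$ interlace the zeros of $q$" means the corresponding sets of zeros satisfy this. *)

theory Defs
  imports "HOL-Computational_Algebra.Polynomial"
begin

text \<open>Sequences \<phi> = (\<phi>_i)_{i \<ge> 1} are modelled as functions nat \<Rightarrow> real; the value at 0 is ignored.\<close>

fun Hphi :: "(nat \<Rightarrow> real) \<Rightarrow> nat \<Rightarrow> real poly" where
  "Hphi \<phi> 0 = 1"
| "Hphi \<phi> (Suc n) = [:0, 2:] * Hphi \<phi> n - pderiv (Hphi \<phi> n) + smult (\<phi> (Suc n)) (Hphi \<phi> n)"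

definition remove_at :: "nat \<Rightarrow> (nat \<Rightarrow> real) \<Rightarrow> nat \<Rightarrow> real" where
  "remove_at l \<phi> = (\<lambda>i. if i < l then \<phi> i else \<phi> (Suc i))"

definition perturb :: "nat \<Rightarrow> real \<Rightarrow> (nat \<Rightarrow> real) \<Rightarrow> nat \<Rightarrow> real" where
  "perturb l M \<phi> = (\<lambda>i. \<phi> i + (if i = l then M else 0))"

definition zeros :: "real poly \<Rightarrow> real set" where
  "zeros p = {x. poly p x = 0}"

definition consecutive :: "real set \<Rightarrow> real \<Rightarrow> real \<Rightarrow> bool" where
  "consecutive S a b \<longleftrightarrow> a \<in> S \<and> b \<in> S \<and> a < b \<and> \<not> (\<exists>c\<in>S. a < c \<and> c < b)"

definition interlaces :: "real set \<Rightarrow> real set \<Rightarrow> bool" where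
  "interlaces U V \<longleftrightarrow> finite U \<and> finite V \<and> U \<noteq> {} \<and>
     (V \<noteq> {} \<longrightarrow> Min U < Min V) \<and>
     (\<forall>a b. consecutive U a b \<longrightarrow> (\<exists>v\<in>V. a < v \<and> v < b)) \<and>
     (\<forall>a b. consecutive V a b \<longrightarrow> (\<exists>u\<in>U. a < u \<and> u < b))"

text \<open>k-th zero (1-based) in increasing order.\<close>
definition kth_zero :: "nat \<Rightarrow> (nat \<Rightarrow> real) \<Rightarrow> nat \<Rightarrow> real" where
  "kth_zero n \<phi> k = sorted_list_of_set (zeros (Hphi \<phi> n)) ! (k - 1)"

end

theory Submission
  imports Defs
begin

definition opT :: "real \<Rightarrow> real poly \<Rightarrow> real poly" where
  "opT c p = [:c, 2:] * p - pderiv p"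

lemma Hphi_Suc_opT: "Hphi \<phi> (Suc n) = opT (\<phi> (Suc n)) (Hphi \<phi> n)"
  by (simp add: opT_def algebra_simps smult_add_left)

lemma opT_comm: "opT a (opT b p) = opT b (opT a p)"
  by (simp add: opT_def pderiv_mult pderiv_diff pderiv_pCons pderiv_add pderiv_smult algebra_simps)

lemma opT_add: "opT (c + M) g = opT c g + smult M g"
  by (simp add: opT_def algebra_simps smult_add_left)

lemma Hphi_cong: "(\<And>i. 1 \<le> i \<Longrightarrow> i \<le> n \<Longrightarrow> \<phi> i = \<psi> i) \<Longrightarrow> Hphi \<phi> n = Hphi \<psi> n"
  by (induction n) auto

lemma Hphi_remove:
  assumes "1 \<le> l" "l \<le> Suc n"
  shows "Hphi \<phi> (Suc n) = opT (\<phi> l) (Hphi (remove_at l \<phi>) n)"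
  using assms
proof (induction n)
  case 0
  then have "l = 1" by simp
  then show ?case by (simp only: Hphi_Suc_opT) (simp add: remove_at_def)
next
  case (Suc n)
  show ?case
  proof (cases "l = Suc (Suc n)")
    case True
    have "Hphi (remove_at l \<phi>) (Suc n) = Hphi \<phi> (Suc n)"
      by (rule Hphi_cong) (auto simp: remove_at_def True)
    then show ?thesis using True by (simp only: Hphi_Suc_opT)
  next
    case False
    then have l: "l \<le> Suc n" using Suc by auto
    have "Hphi \<phi> (Suc (Suc n)) = opT (\<phi> (Suc (Suc n))) (opT (\<phi> l) (Hphi (remove_at l \<phi>) n))"
      using Suc.IH[OF Suc.prems(1) l] by (simp only: Hphi_Suc_opT)
    also have "\<dots> = opT (\<phi> l) (opT (remove_at l \<phi> (Suc n)) (Hphi (remove_at l \<phi>) n))"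
      using l by (simp add: opT_comm remove_at_def)
    finally show ?thesis by (simp only: Hphi_Suc_opT)
  qed
qed

lemma Hphi_remove_big:
  assumes "Suc n < l"
  shows "Hphi (remove_at l \<phi>) n = Hphi \<phi> n"
  by (rule Hphi_cong) (use assms in \<open>auto simp: remove_at_def\<close>)

lemma Hphi_perturb:
  assumes "1 \<le> l" "l \<le> Suc m"
  shows "Hphi (perturb l M \<phi>) (Suc m) = opT (\<phi> l + M) (Hphi (remove_at l \<phi>) m)"
proof -
  have "remove_at l (perturb l M \<phi>) = remove_at l \<phi>"
    by (auto simp: remove_at_def perturb_def fun_eq_iff)
  then show ?thesis using Hphi_remove[OF assms, of "perturb l M \<phi>"]
    by (simp add: perturb_def)
qed


lemma chain_mono:
  fixes f :: "nat \<Rightarrow> real"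
  assumes "\<And>k. Suc k < a \<Longrightarrow> f k < f (Suc k)" "i < j" "j < a"
  shows "f i < f j"
  using assms(2,3)
proof (induction j)
  case 0 then show ?case by simp
next
  case (Suc j)
  then show ?case using assms(1)[of j]
    by (cases "i = j") (auto simp: less_Suc_eq)
qed

lemma sign_prod:
  fixes z :: "nat \<Rightarrow> real"
  assumes "finite S" "\<forall>i\<in>S. z i \<noteq> x"
  shows "(-1) ^ card {i\<in>S. x < z i} * (\<Prod>i\<in>S. x - z i) > 0"
  using assms
proof (induction S rule: finite_induct)
  case empty then show ?case by simp
next
  case (insert j S)
  have fin: "finite {i\<in>S. x < z i}" using insert by simp
  have nj: "j \<notin> {i\<in>S. x < z i}" using insert by simp
  have IH: "(-1) ^ card {i\<in>S. x < z i} * (\<Prod>i\<in>S. x - z i) > 0" using insert by simp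
  show ?case
  proof (cases "x < z j")
    case True
    then have "{i\<in>insert j S. x < z i} = insert j {i\<in>S. x < z i}" by auto
    then have "card {i\<in>insert j S. x < z i} = Suc (card {i\<in>S. x < z i})" using fin nj by simp
    then show ?thesis using insert True IH
    proof -
      have "(-1) ^ card {i\<in>insert j S. x < z i} * (\<Prod>i\<in>insert j S. x - z i)
          = ((-1) ^ card {i\<in>S. x < z i} * (\<Prod>i\<in>S. x - z i)) * (z j - x)"
        using \<open>card _ = _\<close> insert by (simp add: algebra_simps)
      also have "\<dots> > 0" using IH True by simp
      finally show ?thesis .
    qed
  next
    case False
    then have "{i\<in>insert j S. x < z i} = {i\<in>S. x < z i}" by auto
    moreover have "x - z j > 0" using False insert by auto
    ultimately show ?thesis using insert IH
      by (simp add: mult.left_commute)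
  qed
qed

lemma const_sign:
  fixes p :: "real poly"
  assumes "x \<le> y" "\<forall>t. x \<le> t \<and> t \<le> y \<longrightarrow> poly p t \<noteq> 0"
  shows "poly p x * poly p y > 0"
proof (rule ccontr)
  assume nt: "\<not> ?thesis"
  moreover have "poly p x \<noteq> 0" "poly p y \<noteq> 0" using assms by auto
  ultimately have "poly p x * poly p y < 0" by (simp add: linorder_not_less order_le_less)
  moreover have "x < y" using assms nt by (cases "x = y") (auto simp: zero_less_mult_iff)
  ultimately obtain t where "x < t" "t < y" "poly p t = 0" using poly_IVT by blast
  then show False using assms by auto
qed

lemma prod_dvd_roots:
  fixes p :: "real poly" and m :: nat
  assumes "inj_on w {..<m}" "\<forall>k<m. poly p (w k) = 0"
  shows "(\<Prod>k<m. [:-w k, 1:]) dvd p"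
  using assms
proof (induction m)
  case 0 then show ?case by simp
next
  case (Suc m)
  have "inj_on w {..<m}" using Suc.prems(1) by (rule inj_on_subset) auto
  then have "(\<Prod>k<m. [:-w k, 1:]) dvd p" using Suc.IH Suc.prems(2) by simp
  then obtain r where r: "p = (\<Prod>k<m. [:-w k, 1:]) * r" by (elim dvdE)
  have "poly (\<Prod>k<m. [:-w k, 1:]) (w m) \<noteq> 0"
    using Suc.prems(1) by (auto simp: poly_prod inj_on_def) (metis lessThan_iff less_Suc_eq less_irrefl)
  moreover have "poly p (w m) = 0" using Suc by auto
  ultimately have "poly r (w m) = 0" using r by simp
  then have "[:-w m, 1:] dvd r" by (simp add: poly_eq_0_iff_dvd)
  then have "(\<Prod>k<m. [:-w k, 1:]) * [:-w m, 1:] dvd p" using r by (simp only: mult_dvd_mono dvd_refl)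
  then show ?case by (simp only: prod.lessThan_Suc)
qed

lemma degree_prod_lin: "degree (\<Prod>k<(m::nat). [:-(w k::real), 1:]) = m"
  by (subst degree_prod_eq_sum_degree) auto

lemma lead_prod_lin: "lead_coeff (\<Prod>k<(m::nat). [:-(w k::real), 1:]) = 1"
  by (simp add: lead_coeff_prod)

lemma poly_from_roots:
  fixes p :: "real poly" and m :: nat
  assumes "p \<noteq> 0" "degree p = m" "inj_on w {..<m}" "\<forall>k<m. poly p (w k) = 0"
  shows "p = smult (lead_coeff p) (\<Prod>k<m. [:-w k, 1:])"
proof -
  obtain r where r: "p = (\<Prod>k<m. [:-w k, 1:]) * r"
    using prod_dvd_roots[OF assms(3,4)] by (elim dvdE)
  have "r \<noteq> 0" using r assms by auto
  then have "degree p = m + degree r" using r by (simp add: degree_mult_eq degree_prod_lin)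
  then have "degree r = 0" using assms by simp
  then have "r = [:coeff r 0:]" using degree_0_id by metis
  moreover have "lead_coeff p = coeff r 0" using r \<open>degree r = 0\<close>
    by (simp add: lead_prod_lin lead_coeff_mult)
  ultimately show ?thesis using r by (metis mult.commute mult_pCons_left mult_zero_left pCons_0_0 add_0_right) 
qed

lemma zeros_prod: "zeros (smult C (\<Prod>k<(m::nat). [:-w k, 1:])) = (if C = 0 then UNIV else w ` {..<m})"
  by (auto simp: zeros_def poly_prod prod_zero_iff)

lemma sorted_map_mono:
  fixes w :: "nat \<Rightarrow> real"
  assumes "\<And>k. Suc k < m \<Longrightarrow> w k < w (Suc k)"
  shows "sorted_list_of_set (w ` {..<m}) = map w [0..<m]"
proof -
  have inj: "inj_on w {..<m}"
    by (auto simp: inj_on_def) (metis chain_mono[where f=w and a=m, OF assms] linorder_neqE less_irrefl)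
  have "sorted_wrt (<) (map w [0..<m])"
    by (auto simp: sorted_wrt_iff_nth_less intro: chain_mono[where f=w and a=m, OF assms])
  moreover have "set (map w [0..<m]) = w ` {..<m}" by auto
  moreover have "length (map w [0..<m]) = card (w ` {..<m})" using inj by (simp add: card_image)
  ultimately show ?thesis by (subst sorted_list_of_set_unique[symmetric]) auto
qed


lemma chain_less_iff:
  fixes f :: "nat \<Rightarrow> real"
  assumes "\<And>k. Suc k < a \<Longrightarrow> f k < f (Suc k)" "i < a" "j < a"
  shows "f i < f j \<longleftrightarrow> i < j"
  using chain_mono[where f=f and a=a, OF assms(1)] assms(2,3)
  by (metis linorder_neqE_nat less_asym less_irrefl)

lemma Min_chain:
  fixes f :: "nat \<Rightarrow> real"
  assumes "\<And>k. Suc k < a \<Longrightarrow> f k < f (Suc k)" "0 < a"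
  shows "Min (f ` {..<a}) = f 0"
proof (rule Min_eqI)
  show "finite (f ` {..<a})" by simp
  show "f 0 \<in> f ` {..<a}" using assms by simp
  fix y assume "y \<in> f ` {..<a}"
  then obtain i where "i < a" "y = f i" by auto
  then show "f 0 \<le> y" using chain_mono[where f=f and a=a, OF assms(1), of 0 i]
    by (cases i) auto
qed

lemma consecutive_chain:
  fixes f :: "nat \<Rightarrow> real"
  assumes "\<And>k. Suc k < a \<Longrightarrow> f k < f (Suc k)" "consecutive (f ` {..<a}) x y"
  shows "\<exists>i. Suc i < a \<and> x = f i \<and> y = f (Suc i)"
proof -
  from assms(2) obtain i j where ij: "i < a" "j < a" "x = f i" "y = f j" "f i < f j"
    and no: "\<not> (\<exists>c\<in>f ` {..<a}. x < c \<and> c < y)"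
    unfolding consecutive_def by auto
  have "i < j" using ij chain_less_iff[where f=f and a=a, OF assms(1)] by auto
  show ?thesis
  proof (cases "j = Suc i")
    case True then show ?thesis using ij by auto
  next
    case False
    then have "Suc i < j" using \<open>i < j\<close> by simp
    then have "f i < f (Suc i)" "f (Suc i) < f j"
      using ij chain_less_iff[where f=f and a=a, OF assms(1)] by auto
    then show ?thesis using no ij \<open>Suc i < j\<close> by auto
  qed
qed

lemma interlace_lists:
  fixes u v :: "nat \<Rightarrow> real" and a b :: nat
  assumes "1 \<le> a" "b \<le> a" "a \<le> Suc b"
    and uv: "\<forall>k<b. u k < v k" and vu: "\<forall>k. Suc k < a \<longrightarrow> v k < u (Suc k)"
  shows "interlaces (u ` {..<a}) (v ` {..<b})"
proof -
  have cu: "u k < u (Suc k)" if "Suc k < a" for k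
    using uv vu that assms(3) by (meson less_trans Suc_less_SucD less_le_trans)
  have cv: "v k < v (Suc k)" if "Suc k < b" for k
    using uv vu that assms(2) by (meson less_trans less_le_trans)
  show ?thesis unfolding interlaces_def
  proof (intro conjI allI impI)
    show "finite (u ` {..<a})" "finite (v ` {..<b})" by auto
    show "u ` {..<a} \<noteq> {}" using assms by (auto simp: lessThan_empty_iff)
    show "Min (u ` {..<a}) < Min (v ` {..<b})" if "v ` {..<b} \<noteq> {}"
    proof -
      have "0 < b" using that by auto
      then show ?thesis using Min_chain[where f=u and a=a, OF cu] Min_chain[where f=v and a=b, OF cv] uv assms
        by auto
    qed
    fix x y
    show "\<exists>w\<in>v ` {..<b}. x < w \<and> w < y" if cons: "consecutive (u ` {..<a}) x y"
    proof -
      obtain i where "Suc i < a" "x = u i" "y = u (Suc i)"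
        using consecutive_chain[where f=u and a=a, OF cu cons] by auto
      moreover have "i < b" using \<open>Suc i < a\<close> assms by simp
      ultimately show ?thesis using uv vu by auto
    qed
    show "\<exists>w\<in>u ` {..<a}. x < w \<and> w < y" if cons: "consecutive (v ` {..<b}) x y"
    proof -
      obtain i where "Suc i < b" "x = v i" "y = v (Suc i)"
        using consecutive_chain[where f=v and a=b, OF cv cons] by auto
      moreover have "Suc i < a" using \<open>Suc i < b\<close> assms by simp
      ultimately show ?thesis using uv vu by (intro bexI[of _ "u (Suc i)"]) auto
    qed
  qed
qed

lemma roots_in_intervals:
  fixes p :: "real poly" and b :: "nat \<Rightarrow> real" and m :: nat
  assumes "p \<noteq> 0" "degree p = m" "\<forall>k<m. b k < b (Suc k)"
    "\<forall>k<m. poly p (b k) * poly p (b (Suc k)) < 0"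
  shows "\<exists>w. (\<forall>k<m. b k < w k \<and> w k < b (Suc k)) \<and> zeros p = w ` {..<m}"
proof -
  have "\<forall>k<m. \<exists>x. b k < x \<and> x < b (Suc k) \<and> poly p x = 0"
    using assms(3,4) poly_IVT by blast
  then obtain w where w: "\<forall>k<m. b k < w k \<and> w k < b (Suc k) \<and> poly p (w k) = 0"
    by metis
  have cw: "w k < w (Suc k)" if "Suc k < m" for k
  proof -
    have "w k < b (Suc k)" using w that by auto
    also have "\<dots> < w (Suc k)" using w that by auto
    finally show ?thesis .
  qed
  have inj: "inj_on w {..<m}"
    using chain_less_iff[where f=w and a=m, OF cw] by (auto simp: inj_on_def) (metis less_irrefl linorder_neqE_nat)
  have sub: "w ` {..<m} \<subseteq> zeros p" using w by (auto simp: zeros_def)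
  have fin: "finite (zeros p)" using assms(1) poly_roots_finite by (simp add: zeros_def)
  have "card (zeros p) \<le> m" using card_poly_roots_bound[OF assms(1)] assms(2) by (simp add: zeros_def)
  moreover have "card (w ` {..<m}) = m" using inj by (simp add: card_image)
  moreover have "card (w ` {..<m}) \<le> card (zeros p)" using card_mono[OF fin sub] .
  ultimately have "w ` {..<m} = zeros p" using card_subset_eq[OF fin sub] by linarith
  then show ?thesis using w by auto
qed


lemma sgn_transfer: "A * B > 0 \<Longrightarrow> e * B > 0 \<Longrightarrow> e * A > (0::real)"
  by (auto simp: zero_less_mult_iff)

lemma neg1_sq: "(-1::real) ^ j * (-1) ^ j = 1"
  by (simp add: power_mult_distrib[symmetric])

lemma neg1_diff: "k \<le> n \<Longrightarrow> (-1::real) ^ (n - k) = (-1) ^ (n + k)"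
proof -
  assume "k \<le> n"
  then obtain d where d: "n = k + d" using le_Suc_ex by blast
  have "(-1::real) ^ (n + k) = (-1) ^ d * ((-1) ^ k * (-1) ^ k)"
    unfolding d by (simp add: power_add algebra_simps)
  then show ?thesis using d by (simp add: neg1_sq)
qed

lemma poly_g: fixes z :: "nat \<Rightarrow> real" shows "poly (smult C (\<Prod>i<(n::nat). [:-z i, 1:])) x = C * (\<Prod>i<n. x - z i)"
  unfolding poly_smult poly_prod by (intro arg_cong[where f="(*) C"] prod.cong) (auto simp: algebra_simps)

lemma g_sign:
  fixes z :: "nat \<Rightarrow> real"
  assumes C: "C > 0" and k: "k \<le> n" and x: "\<forall>i<n. (i<k \<longrightarrow> z i < x) \<and> (k \<le> i \<longrightarrow> x < z i)"
  shows "(-1) ^ (n + k) * poly (smult C (\<Prod>i<n. [:-z i, 1:])) x > 0"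
proof -
  have ne: "\<forall>i\<in>{..<n}. z i \<noteq> x" using x by (metis lessThan_iff not_le less_irrefl)
  have "{i\<in>{..<n}. x < z i} = {k..<n}"
  proof (intro set_eqI iffI)
    fix i assume "i \<in> {i\<in>{..<n}. x < z i}"
    then show "i \<in> {k..<n}" using x by (auto simp: not_le)
  next
    fix i assume "i \<in> {k..<n}"
    then show "i \<in> {i\<in>{..<n}. x < z i}" using x by auto
  qed
  then have "card {i\<in>{..<n}. x < z i} = n - k" by simp
  then have "(-1) ^ (n - k) * (\<Prod>i<n. x - z i) > 0" using sign_prod[OF _ ne] by simp
  then show ?thesis using C neg1_diff[OF k] by (simp add: poly_prod mult.left_commute)
qed

lemma pderiv_lin_root: "poly (pderiv ([:-a, 1:] * Q)) a = poly Q (a::real)"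
  unfolding pderiv_mult poly_add poly_mult by (simp add: pderiv_pCons)

lemma deriv_at_root:
  fixes z :: "nat \<Rightarrow> real"
  assumes k: "k < n"
  shows "poly (pderiv (smult C (\<Prod>i<n. [:-z i, 1:]))) (z k) = C * (\<Prod>i\<in>{..<n}-{k}. z k - z i)"
proof -
  have "(\<Prod>i<n. [:-z i, 1:]) = [:-z k, 1:] * (\<Prod>i\<in>{..<n}-{k}. [:-z i, 1:])"
    using k by (subst prod.remove[of _ k]) auto
  then show ?thesis by (simp only: pderiv_smult poly_smult pderiv_lin_root poly_prod)
      (intro arg_cong[where f="(*) C"] prod.cong, auto)
qed

lemma p_sign_at_root:
  fixes z :: "nat \<Rightarrow> real"
  assumes C: "C > 0" and z: "\<forall>i. Suc i < n \<longrightarrow> z i < z (Suc i)" and k: "k < n"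
  shows "(-1) ^ (n + k) * poly (opT c (smult C (\<Prod>i<n. [:-z i, 1:]))) (z k) > 0"
proof -
  have cz: "z i < z (Suc i)" if "Suc i < n" for i using z that by auto
  have ne: "\<forall>i\<in>{..<n}-{k}. z i \<noteq> z k"
    using chain_less_iff[where f=z and a=n, OF cz] k by (auto, metis less_irrefl linorder_neqE_nat)
  have "{i\<in>{..<n}-{k}. z k < z i} = {Suc k..<n}"
    using chain_less_iff[where f=z and a=n, OF cz] k by auto
  then have "card {i\<in>{..<n}-{k}. z k < z i} = n - Suc k" by simp
  then have A: "(-1) ^ (n - Suc k) * (\<Prod>i\<in>{..<n}-{k}. z k - z i) > 0"
    using sign_prod[OF _ ne] by simp
  have B: "(-1::real) ^ (n - Suc k) = - ((-1) ^ (n + k))"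
    using neg1_diff[of "Suc k" n] k by simp
  have "poly (\<Prod>i<n. [:-z i, 1:]) (z k) = 0"
    using k by (simp add: poly_prod, blast)
  then have "poly (opT c (smult C (\<Prod>i<n. [:-z i, 1:]))) (z k) = - (C * (\<Prod>i\<in>{..<n}-{k}. z k - z i))"
    using deriv_at_root[OF k, of C z] by (simp add: opT_def)
  then show ?thesis using A B C by (simp add: mult.left_commute mult_pos_neg)
qed


lemma p_degree:
  fixes z :: "nat \<Rightarrow> real"
  assumes C: "C > 0" and g: "g = smult C (\<Prod>i<n. [:-z i, 1:])"
  shows "degree (opT c g) = Suc n" "lead_coeff (opT c g) = 2 * C"
proof -
  have dg: "degree g = n" using C g by (simp add: degree_prod_lin)
  have lg: "coeff g n = C" using C g dg by (metis lead_coeff_smult lead_prod_lin mult.right_neutral)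
  have cp: "coeff (opT c g) (Suc n) = 2 * C"
    using dg lg by (simp add: opT_def coeff_pderiv coeff_eq_0)
  moreover have "degree (opT c g) \<le> Suc n"
    unfolding opT_def
  proof (rule degree_diff_le)
    show "degree ([:c, 2:] * g) \<le> Suc n"
      using degree_mult_le[of "[:c, 2:]" g] dg by simp
    show "degree (pderiv g) \<le> Suc n" using dg by (simp add: degree_pderiv)
  qed
  ultimately show "degree (opT c g) = Suc n" using C
    by (metis le_antisym le_degree mult_eq_0_iff zero_neq_numeral less_irrefl)
  then show "lead_coeff (opT c g) = 2 * C" using cp by simp
qed


lemma right_end:
  fixes p :: "real poly"
  assumes "lead_coeff p > 0"
  shows "\<exists>R. \<forall>x\<ge>R. poly p x > 0"
  using poly_pinfty_gt_lc[OF assms] assms by (meson less_le_trans)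

lemma left_end:
  fixes p :: "real poly"
  assumes "lead_coeff p > 0" "degree p = m"
  shows "\<exists>L. \<forall>x\<le>L. (-1) ^ m * poly p x > 0"
proof -
  define q where "q = smult ((-1) ^ m) (pcompose p [:0, -1:])"
  have "lead_coeff (pcompose p [:0, -1:]) = lead_coeff p * (-1) ^ m"
    using lead_coeff_comp[of "[:0, -1:]" p] assms(2) by simp
  then have "lead_coeff q = lead_coeff p"
    by (simp add: q_def mult.left_commute neg1_sq)
  then obtain R where R: "\<forall>x\<ge>R. poly q x > 0" using right_end assms(1) by metis
  show ?thesis
  proof (intro exI allI impI)
    fix x :: real assume "x \<le> - R"
    then have "poly q (-x) > 0" using R by auto
    then show "(-1) ^ m * poly p x > 0" by (simp add: q_def poly_pcompose)
  qed
qed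


lemma between_sign:
  fixes p :: "real poly" and m a :: nat
  assumes "zeros p = w ` {..<m}"
    "\<forall>j<m. (j < a \<longrightarrow> w j < x \<and> w j < y) \<and> (a \<le> j \<longrightarrow> x < w j \<and> y < w j)"
  shows "poly p x * poly p y > 0"
proof -
  have nz: "poly p t \<noteq> 0" if "min x y \<le> t" "t \<le> max x y" for t
  proof
    assume "poly p t = 0"
    then have "t \<in> w ` {..<m}" using assms(1) by (auto simp: zeros_def)
    then obtain j where "j < m" "t = w j" by auto
    moreover note sp = assms(2)[rule_format, OF \<open>j < m\<close>]
    ultimately show False
    proof (cases "j < a")
      case True
      then have "w j < min x y" using sp by simp
      then show False using that \<open>t = w j\<close> by (auto simp: min_le_iff_disj)
    next
      case False
      then have "max x y < w j" using sp by simp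
      then show False using that \<open>t = w j\<close> by (auto simp: le_max_iff_disj)
    qed
  qed
  have "poly p (min x y) * poly p (max x y) > 0"
    by (rule const_sign) (simp, use nz in blast)
  then show ?thesis by (cases "x \<le> y") (auto simp: min_def max_def mult.commute)
qed

lemma alt_sign: "e * e = 1 \<Longrightarrow> e * A > 0 \<Longrightarrow> - e * B > 0 \<Longrightarrow> A * B < (0::real)"
proof -
  assume h: "e * e = 1" "e * A > 0" "- e * B > 0"
  have "(e * A) * (e * B) = (e * e) * (A * B)" by (simp only: ac_simps)
  then have eq: "(e * A) * (e * B) = A * B" using h(1) by simp
  have "e * B < 0" using h(3) by simp
  then have "(e * A) * (e * B) < 0" using h(2) by (rule mult_pos_neg[rotated])
  then show ?thesis using eq by simp
qed

lemma core:
  fixes z :: "nat \<Rightarrow> real"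
  assumes C: "C > 0" and z: "\<forall>i. Suc i < n \<longrightarrow> z i < z (Suc i)"
    and g: "g = smult C (\<Prod>i<n. [:-z i, 1:])"
  shows "\<exists>w. opT c g = smult (2*C) (\<Prod>i<Suc n. [:-w i, 1:]) \<and> (\<forall>k<n. w k < z k \<and> z k < w (Suc k)) \<and>
    (\<forall>k\<le>n. \<forall>x. (\<forall>i<n. (i<k \<longrightarrow> z i < x) \<and> (k \<le> i \<longrightarrow> x < z i)) \<longrightarrow>
        (x < w k \<longrightarrow> (-1)^(n+k) * poly (opT c g) x < 0) \<and> (w k < x \<longrightarrow> (-1)^(n+k) * poly (opT c g) x > 0))"
proof -
  define p where "p = opT c g"
  have dp: "degree p = Suc n" and lp: "lead_coeff p = 2*C" using p_degree[OF C g] p_def by auto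
  have p0: "p \<noteq> 0" using dp by auto
  have cz: "\<And>i. Suc i < n \<Longrightarrow> z i < z (Suc i)" using z by auto
  have lpos: "lead_coeff p > 0" using lp C by simp
  obtain R0 where R0: "\<forall>x\<ge>R0. poly p x > 0" using right_end[OF lpos] by blast
  obtain L0 where L0: "\<forall>x\<le>L0. (-1)^(Suc n) * poly p x > 0" using left_end[OF lpos dp] by blast
  define R where "R = Max (insert R0 (insert L0 (z ` {..<n}))) + 1"
  define L where "L = Min (insert L0 (z ` {..<n})) - 1"
  have fR: "finite (insert R0 (insert L0 (z ` {..<n})))" by simp
  have zR: "\<forall>i<n. z i < R" unfolding R_def using Max_ge[OF fR] by (meson imageI insertCI lessThan_iff less_add_one order.strict_trans1)
  have RR: "R0 \<le> R" unfolding R_def using Max_ge[OF fR, of R0] by force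
  have LR: "L0 < R" unfolding R_def using Max_ge[OF fR, of L0] by force
  have fL: "finite (insert L0 (z ` {..<n}))" by simp
  have zL: "\<forall>i<n. L < z i" unfolding L_def using Min_le[OF fL]
    by (smt (verit) imageI insertCI lessThan_iff)
  have mL: "Min (insert L0 (z ` {..<n})) \<le> L0" by (rule Min_le[OF fL]) simp
  have LL: "L < L0" unfolding L_def using mL by linarith
  define b where "b k = (if k = 0 then L else if k \<le> n then z (k - 1) else R)" for k
  have bS: "(-1)^(n+k+1) * poly p (b k) > 0" if "k \<le> Suc n" for k
  proof (cases "k = 0")
    case True then show ?thesis using L0 LL by (simp add: b_def)
  next
    case False
    then obtain j where j: "k = Suc j" by (cases k) auto
    show ?thesis
    proof (cases "k \<le> n")
      case True
      then have "(-1) ^ (n + j) * poly p (z j) > 0"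
        using p_sign_at_root[OF C z, of j c] j g p_def by simp
      then show ?thesis using j True by (simp add: b_def)
    next
      case False
      then have "k = Suc n" using that by simp
      moreover have "poly p R > 0" using R0 RR by simp
      ultimately show ?thesis by (simp add: b_def power_add neg1_sq)
    qed
  qed
  have bmono: "\<forall>k<Suc n. b k < b (Suc k)"
  proof (intro allI impI)
    fix k assume k: "k < Suc n"
    show "b k < b (Suc k)"
    proof (cases "k = 0")
      case True then show ?thesis using zL LL LR by (cases n) (auto simp: b_def)
    next
      case False
      then obtain j where j: "k = Suc j" by (cases k) auto
      then show ?thesis using k cz zR by (auto simp: b_def)
    qed
  qed
  have bprod: "\<forall>k<Suc n. poly p (b k) * poly p (b (Suc k)) < 0"
  proof (intro allI impI)
    fix k assume k: "k < Suc n"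
    show "poly p (b k) * poly p (b (Suc k)) < 0"
      by (rule alt_sign[of "(-1)^(n+k+1)"]) (use bS[of k] bS[of "Suc k"] k in \<open>auto simp: neg1_sq\<close>)
  qed
  obtain w where wb: "\<forall>k<Suc n. b k < w k \<and> w k < b (Suc k)" and wz: "zeros p = w ` {..<Suc n}"
    using roots_in_intervals[OF p0 dp bmono bprod] by blast
  have wz1: "\<forall>k<n. w k < z k \<and> z k < w (Suc k)"
  proof (intro allI impI)
    fix k assume k: "k < n"
    have "b (Suc k) = z k" using k by (simp add: b_def)
    then show "w k < z k \<and> z k < w (Suc k)" using wb[rule_format, of k] wb[rule_format, of "Suc k"] k by simp
  qed
  have cw: "w k < w (Suc k)" if "Suc k < Suc n" for k
    using wb that by (meson less_trans lessI less_trans_Suc)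
  have inj: "inj_on w {..<Suc n}"
    using chain_less_iff[where f=w and a="Suc n", OF cw] by (auto simp: inj_on_def) (metis less_irrefl linorder_neqE_nat)
  have roots: "\<forall>k<Suc n. poly p (w k) = 0" using wz by (auto simp: zeros_def)
  have form: "p = smult (2*C) (\<Prod>i<Suc n. [:-w i, 1:])"
    using poly_from_roots[OF p0 dp inj roots] lp by simp
  have wle: "w i \<le> w j" if "i \<le> j" "j < Suc n" for i j
    using chain_mono[where f=w and a="Suc n", OF cw, of i j] that by (cases "i = j") auto
  have signs: "(x < w k \<longrightarrow> (-1)^(n+k) * poly p x < 0) \<and> (w k < x \<longrightarrow> (-1)^(n+k) * poly p x > 0)"
    if k: "k \<le> n" and x: "\<forall>i<n. (i<k \<longrightarrow> z i < x) \<and> (k \<le> i \<longrightarrow> x < z i)" for k x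
  proof (intro conjI impI)
    assume xw: "x < w k"
    have "\<forall>j<Suc n. (j < k \<longrightarrow> w j < x \<and> w j < b k) \<and> (k \<le> j \<longrightarrow> x < w j \<and> b k < w j)"
    proof (intro allI impI conjI)
      fix j assume j: "j < Suc n" "j < k"
      then obtain i where i: "k = Suc i" by (cases k) auto
      have "w j \<le> w i" by (rule wle) (use j i k in auto)
      moreover have "w i < z i" "z i < x" using wz1 x i k by auto
      moreover have "w i < b k" using wb i k by auto
      ultimately show "w j < x" "w j < b k" by auto
    next
      fix j assume j: "j < Suc n" "k \<le> j"
      have "w k \<le> w j" by (rule wle) (use j in auto)
      moreover have "b k < w k" using wb k by auto
      ultimately show "x < w j" "b k < w j" using xw by auto
    qed
    then have "poly p x * poly p (b k) > 0" by (rule between_sign[OF wz])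
    moreover have "(- ((-1)^(n+k))) * poly p (b k) > 0" using bS[of k] k by simp
    ultimately have "(- ((-1)^(n+k))) * poly p x > 0" by (rule sgn_transfer)
    then show "(-1)^(n+k) * poly p x < 0" by simp
  next
    assume xw: "w k < x"
    have "\<forall>j<Suc n. (j < Suc k \<longrightarrow> w j < x \<and> w j < b (Suc k)) \<and> (Suc k \<le> j \<longrightarrow> x < w j \<and> b (Suc k) < w j)"
    proof (intro allI impI conjI)
      fix j assume j: "j < Suc n" "j < Suc k"
      have "w j \<le> w k" by (rule wle) (use j k in auto)
      moreover have "w k < b (Suc k)" using wb k by auto
      ultimately show "w j < x" "w j < b (Suc k)" using xw by auto
    next
      fix j assume j: "j < Suc n" "Suc k \<le> j"
      have "w (Suc k) \<le> w j" by (rule wle) (use j in auto)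
      moreover have "k < n" using j by simp
      moreover have "b (Suc k) < w (Suc k)" using wb j by auto
      moreover have "z k < w (Suc k)" "x < z k" using wz1 x \<open>k < n\<close> by auto
      ultimately show "x < w j" "b (Suc k) < w j" by auto
    qed
    then have "poly p x * poly p (b (Suc k)) > 0" by (rule between_sign[OF wz])
    moreover have "((-1)^(n+k)) * poly p (b (Suc k)) > 0" using bS[of "Suc k"] k by simp
    ultimately show "(-1)^(n+k) * poly p x > 0" by (rule sgn_transfer)
  qed
  show ?thesis using form wz1 signs unfolding p_def by blast
qed


lemma poly_prod_root:
  fixes w :: "nat \<Rightarrow> real" and m :: nat
  assumes "k < m" shows "poly (smult C (\<Prod>i<m. [:-w i, 1:])) (w k) = 0"
  using assms by (simp add: poly_prod prod_zero_iff) blast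

lemma zeros_prod': "C \<noteq> 0 \<Longrightarrow> zeros (smult C (\<Prod>k<(m::nat). [:-w k, 1:])) = w ` {..<m}"
  by (simp add: zeros_prod)

lemma Hphi_form:
  "\<exists>C z. C > 0 \<and> (\<forall>i. Suc i < n \<longrightarrow> z i < z (Suc i)) \<and> Hphi \<phi> n = smult C (\<Prod>i<n. [:-z i, 1:])"
proof (induction n)
  case 0
  show ?case by (rule exI[of _ 1]) simp
next
  case (Suc n)
  then obtain C z where C: "C > 0" and z: "\<forall>i. Suc i < n \<longrightarrow> z i < z (Suc i)"
    and g: "Hphi \<phi> n = smult C (\<Prod>i<n. [:-z i, 1:])" by blast
  obtain w where w: "opT (\<phi> (Suc n)) (Hphi \<phi> n) = smult (2*C) (\<Prod>i<Suc n. [:-w i, 1:])"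
    and wz: "\<forall>k<n. w k < z k \<and> z k < w (Suc k)"
    using core[OF C z g, of "\<phi> (Suc n)"] by blast
  have "\<forall>i. Suc i < Suc n \<longrightarrow> w i < w (Suc i)" using wz by (meson Suc_less_SucD less_trans)
  moreover have "Hphi \<phi> (Suc n) = smult (2*C) (\<Prod>i<Suc n. [:-w i, 1:])"
    by (simp only: Hphi_Suc_opT w)
  ultimately show ?case using C by (intro exI[of _ "2*C"] exI[of _ w]) simp
qed

lemma chain_inj:
  fixes z :: "nat \<Rightarrow> real"
  assumes "\<forall>i. Suc i < n \<longrightarrow> z i < z (Suc i)"
  shows "inj_on z {..<n}"
  using chain_less_iff[where f=z and a=n] assms
  by (auto simp: inj_on_def) (metis less_irrefl linorder_neqE_nat)

lemma order_simple:
  fixes z :: "nat \<Rightarrow> real"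
  assumes C: "C \<noteq> 0" and z: "\<forall>i. Suc i < n \<longrightarrow> z i < z (Suc i)" and j: "j < n"
  shows "order (z j) (smult C (\<Prod>i<n. [:-z i, 1:])) = 1"
proof -
  define Q where "Q = (\<Prod>i\<in>{..<n}-{j}. [:-z i, 1:])"
  have P: "(\<Prod>i<n. [:-z i, 1:]) = [:-z j, 1:] * Q"
    using j unfolding Q_def by (subst prod.remove[of _ j]) auto
  have "poly Q (z j) \<noteq> 0"
    using chain_inj[OF z] j unfolding Q_def by (auto simp: poly_prod inj_on_def)
  then have Q0: "Q \<noteq> 0" and oQ: "order (z j) Q = 0" using order_root by auto
  have "order (z j) ([:-z j, 1:] * Q) = order (z j) [:-z j, 1:] + order (z j) Q"
    using Q0 by (intro order_mult) (metis mult_eq_0_iff pCons_eq_0_iff one_neq_zero)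
  moreover have "order (z j) [:-z j, 1:] = 1" using order_power_n_n[of "z j" 1] by simp
  ultimately show ?thesis using P oQ C by (simp add: order_smult)
qed

lemma part1:
  fixes \<phi> :: "nat \<Rightarrow> real"
  shows "Hphi \<phi> n \<noteq> 0 \<and> card (zeros (Hphi \<phi> n)) = n \<and>
            (\<forall>x\<in>zeros (Hphi \<phi> n). order x (Hphi \<phi> n) = 1)"
proof -
  obtain C z where C: "C > 0" and z: "\<forall>i. Suc i < n \<longrightarrow> z i < z (Suc i)"
    and g: "Hphi \<phi> n = smult C (\<Prod>i<n. [:-z i, 1:])" using Hphi_form by blast
  have ne: "Hphi \<phi> n \<noteq> 0"
    using g C lead_prod_lin[of z n] by (metis smult_eq_0_iff leading_coeff_0_iff zero_neq_one less_irrefl)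
  have zs: "zeros (Hphi \<phi> n) = z ` {..<n}" using g C by (simp add: zeros_prod)
  have "card (zeros (Hphi \<phi> n)) = n" using zs chain_inj[OF z] by (simp add: card_image)
  moreover have "\<forall>x\<in>zeros (Hphi \<phi> n). order x (Hphi \<phi> n) = 1"
    using zs g order_simple[of C n z] C z by auto
  ultimately show ?thesis using ne by blast
qed

lemma part1_interlace:
  fixes \<phi> :: "nat \<Rightarrow> real"
  assumes l: "1 \<le> l"
  shows "interlaces (zeros (Hphi \<phi> (Suc n))) (zeros (Hphi (remove_at l \<phi>) n))"
proof -
  obtain C z where C: "C > 0" and z: "\<forall>i. Suc i < n \<longrightarrow> z i < z (Suc i)"
    and g: "Hphi (remove_at l \<phi>) n = smult C (\<Prod>i<n. [:-z i, 1:])" using Hphi_form by blast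
  define c where "c = (if l \<le> Suc n then \<phi> l else \<phi> (Suc n))"
  have H: "Hphi \<phi> (Suc n) = opT c (Hphi (remove_at l \<phi>) n)"
  proof (cases "l \<le> Suc n")
    case True then show ?thesis using Hphi_remove[OF l True] by (simp add: c_def)
  next
    case False then show ?thesis using Hphi_remove_big[of n l \<phi>] unfolding c_def
      by (simp del: Hphi.simps add: Hphi_Suc_opT)
  qed
  obtain w where w: "opT c (Hphi (remove_at l \<phi>) n) = smult (2*C) (\<Prod>i<Suc n. [:-w i, 1:])"
    and wz: "\<forall>k<n. w k < z k \<and> z k < w (Suc k)"
    using core[OF C z g, of c] by blast
  have "zeros (Hphi \<phi> (Suc n)) = w ` {..<Suc n}" unfolding H w using C by (intro zeros_prod') simp
  moreover have "zeros (Hphi (remove_at l \<phi>) n) = z ` {..<n}" using g C by (simp add: zeros_prod)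
  moreover have "interlaces (w ` {..<Suc n}) (z ` {..<n})"
    by (rule interlace_lists) (use wz in auto)
  ultimately show ?thesis by simp
qed

lemma perturb_pos:
  fixes \<phi> :: "nat \<Rightarrow> real"
  assumes l: "1 \<le> l" "l \<le> n" and M: "M > 0"
  shows "\<exists>w y. zeros (Hphi \<phi> n) = w ` {..<n} \<and> zeros (Hphi (perturb l M \<phi>) n) = y ` {..<n} \<and>
     (\<forall>k<n. y k < w k) \<and> (\<forall>k. Suc k < n \<longrightarrow> w k < y (Suc k))"
proof -
  obtain m where n: "n = Suc m" using l by (cases n) auto
  obtain C z where C: "C > 0" and z: "\<forall>i. Suc i < m \<longrightarrow> z i < z (Suc i)"
    and g: "Hphi (remove_at l \<phi>) m = smult C (\<Prod>i<m. [:-z i, 1:])" using Hphi_form by blast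
  define g' where "g' = Hphi (remove_at l \<phi>) m"
  have lm: "l \<le> Suc m" using l n by simp
  have Hp: "Hphi \<phi> n = opT (\<phi> l) g'" using Hphi_remove[OF l(1) lm] n g'_def by simp
  have Hq: "Hphi (perturb l M \<phi>) n = opT (\<phi> l + M) g'" using Hphi_perturb[OF l(1) lm] n g'_def by simp
  obtain w where w: "opT (\<phi> l) g' = smult (2*C) (\<Prod>i<Suc m. [:-w i, 1:])"
    and wz: "\<forall>k<m. w k < z k \<and> z k < w (Suc k)"
    using core[OF C z g, of "\<phi> l"] g'_def by blast
  obtain y where y: "opT (\<phi> l + M) g' = smult (2*C) (\<Prod>i<Suc m. [:-y i, 1:])"
    and yz: "\<forall>k<m. y k < z k \<and> z k < y (Suc k)"
    and ys: "\<forall>k\<le>m. \<forall>x. (\<forall>i<m. (i<k \<longrightarrow> z i < x) \<and> (k \<le> i \<longrightarrow> x < z i)) \<longrightarrow>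
        (x < y k \<longrightarrow> (-1)^(m+k) * poly (opT (\<phi> l + M) g') x < 0)"
    using core[OF C z g, of "\<phi> l + M"] g'_def by blast
  have cw: "w k < w (Suc k)" if "Suc k < Suc m" for k using wz that by (meson Suc_less_SucD less_trans)
  have wle: "w i \<le> w j" if "i \<le> j" "j < Suc m" for i j
    using chain_mono[where f=w and a="Suc m", OF cw, of i j] that by (cases "i = j") auto
  have yw: "y k < w k" if k: "k < Suc m" for k
  proof -
    have Ik: "\<forall>i<m. (i<k \<longrightarrow> z i < w k) \<and> (k \<le> i \<longrightarrow> w k < z i)"
    proof (intro allI impI conjI)
      fix i assume "i < m" "i < k"
      then show "z i < w k" using wz wle[of "Suc i" k] k by (meson Suc_leI less_le_trans)
    next
      fix i assume "i < m" "k \<le> i"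
      then show "w k < z i" using wz wle[of k i] by (meson le_less_trans less_SucI)
    qed
    have gs: "(-1)^(m+k) * poly g' (w k) > 0" using g_sign[OF C _ Ik] k g'_def g by simp
    have pw: "poly (opT (\<phi> l) g') (w k) = 0" unfolding w using k by (rule poly_prod_root)
    have "poly (opT (\<phi> l + M) g') (w k) = M * poly g' (w k)"
      using pw by (simp add: opT_add)
    then have qs: "(-1)^(m+k) * poly (opT (\<phi> l + M) g') (w k) > 0"
      using gs M by (simp add: mult.left_commute)
    have "\<not> w k < y k"
    proof
      assume "w k < y k"
      then have "(-1)^(m+k) * poly (opT (\<phi> l + M) g') (w k) < 0"
        using ys[rule_format, of k "w k"] k Ik by simp
      then show False using qs by simp
    qed
    moreover have "w k \<noteq> y k"
    proof
      assume "w k = y k"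
      then have "poly (opT (\<phi> l + M) g') (w k) = 0" unfolding y using k by (simp only: poly_prod_root)
      then show False using qs by simp
    qed
    ultimately show ?thesis by simp
  qed
  show ?thesis
  proof (intro exI conjI)
    have "zeros (Hphi \<phi> n) = zeros (smult (2*C) (\<Prod>i<Suc m. [:-w i, 1:]))" by (simp only: Hp w)
    also have "\<dots> = w ` {..<Suc m}" by (rule zeros_prod') (use C in simp)
    finally show "zeros (Hphi \<phi> n) = w ` {..<n}" using n by simp
    have "zeros (Hphi (perturb l M \<phi>) n) = zeros (smult (2*C) (\<Prod>i<Suc m. [:-y i, 1:]))" by (simp only: Hq y)
    also have "\<dots> = y ` {..<Suc m}" by (rule zeros_prod') (use C in simp)
    finally show "zeros (Hphi (perturb l M \<phi>) n) = y ` {..<n}" using n by simp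
    show "\<forall>k<n. y k < w k" using yw n by simp
    show "\<forall>k. Suc k < n \<longrightarrow> w k < y (Suc k)" using wz yz n by (meson Suc_less_SucD less_trans)
  qed
qed


lemma part3:
  fixes \<phi> :: "nat \<Rightarrow> real"
  assumes "1 \<le> l" "l \<le> n" "M > 0"
  shows "interlaces (zeros (Hphi (perturb l M \<phi>) n)) (zeros (Hphi \<phi> n))"
proof -
  obtain w y where w: "zeros (Hphi \<phi> n) = w ` {..<n}" and y: "zeros (Hphi (perturb l M \<phi>) n) = y ` {..<n}"
    and yw: "\<forall>k<n. y k < w k" and wy: "\<forall>k. Suc k < n \<longrightarrow> w k < y (Suc k)"
    using perturb_pos[OF assms] by blast
  show ?thesis unfolding w y by (rule interlace_lists) (use assms yw wy in auto)
qed

lemma perturb_inv: "perturb l (-M) (perturb l M \<phi>) = \<phi>"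
  by (auto simp: perturb_def fun_eq_iff)

lemma perturb_zero: "perturb l 0 \<phi> = \<phi>"
  by (auto simp: perturb_def fun_eq_iff)

lemma mono_step:
  fixes \<phi> :: "nat \<Rightarrow> real"
  assumes "1 \<le> l" "l \<le> n" "M \<ge> 0" "i < n"
  shows "sorted_list_of_set (zeros (Hphi (perturb l M \<phi>) n)) ! i \<le> sorted_list_of_set (zeros (Hphi \<phi> n)) ! i"
proof (cases "M = 0")
  case True then show ?thesis by (simp add: perturb_zero)
next
  case False
  then have M: "M > 0" using assms by simp
  obtain w y where w: "zeros (Hphi \<phi> n) = w ` {..<n}" and y: "zeros (Hphi (perturb l M \<phi>) n) = y ` {..<n}"
    and yw: "\<forall>k<n. y k < w k" and wy: "\<forall>k. Suc k < n \<longrightarrow> w k < y (Suc k)"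
    using perturb_pos[OF assms(1,2) M] by blast
  have cw: "w k < w (Suc k)" if "Suc k < n" for k using yw wy that by (meson less_trans)
  have cy: "y k < y (Suc k)" if "Suc k < n" for k using yw wy that by (meson less_trans Suc_lessD)
  show ?thesis unfolding w y
    using yw assms(4) by (simp add: less_imp_le sorted_map_mono[where w=w and m=n, OF cw] sorted_map_mono[where w=y and m=n, OF cy])
qed

lemma part2:
  fixes \<phi> \<rho> :: "nat \<Rightarrow> real"
  assumes le: "\<forall>j\<ge>1. \<phi> j \<le> \<rho> j" and k: "1 \<le> k" "k \<le> n"
  shows "kth_zero n \<rho> k \<le> kth_zero n \<phi> k"
proof -
  define \<psi> where "\<psi> m = (\<lambda>i. if i \<le> m then \<rho> i else \<phi> i)" for m
  define S where "S f = sorted_list_of_set (zeros (Hphi f n))" for f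
  have step: "\<forall>i<n. S (\<psi> m) ! i \<le> S \<phi> ! i" if "m \<le> n" for m
    using that
  proof (induction m)
    case 0
    have "Hphi (\<psi> 0) n = Hphi \<phi> n" by (rule Hphi_cong) (auto simp: \<psi>_def)
    then show ?case by (simp add: S_def)
  next
    case (Suc m)
    have eq: "\<psi> (Suc m) = perturb (Suc m) (\<rho> (Suc m) - \<phi> (Suc m)) (\<psi> m)"
      by (auto simp: \<psi>_def perturb_def fun_eq_iff)
    have M: "\<rho> (Suc m) - \<phi> (Suc m) \<ge> 0" using le by simp
    show ?case
    proof (intro allI impI)
      fix i assume i: "i < n"
      have "S (\<psi> (Suc m)) ! i \<le> S (\<psi> m) ! i"
        unfolding eq S_def by (rule mono_step) (use Suc.prems M i in auto)
      also have "\<dots> \<le> S \<phi> ! i" using Suc i by simp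
      finally show "S (\<psi> (Suc m)) ! i \<le> S \<phi> ! i" .
    qed
  qed
  have "Hphi (\<psi> n) n = Hphi \<rho> n" by (rule Hphi_cong) (auto simp: \<psi>_def)
  then have "S \<rho> ! (k - 1) \<le> S \<phi> ! (k - 1)" using step[of n] k by (simp add: S_def)
  then show ?thesis by (simp add: kth_zero_def S_def)
qed

theorem theorem3p6:
  fixes \<phi> :: "nat \<Rightarrow> real"
  shows "(\<forall>n. Hphi \<phi> n \<noteq> 0 \<and> card (zeros (Hphi \<phi> n)) = n \<and>
            (\<forall>x\<in>zeros (Hphi \<phi> n). order x (Hphi \<phi> n) = 1) \<and>
            (\<forall>l\<ge>1. interlaces (zeros (Hphi \<phi> (Suc n))) (zeros (Hphi (remove_at l \<phi>) n))))
       \<and> (\<forall>\<rho> :: nat \<Rightarrow> real. (\<forall>j\<ge>1. \<phi> j \<le> \<rho> j) \<longrightarrow>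
            (\<forall>n k. 1 \<le> k \<and> k \<le> n \<longrightarrow> kth_zero n \<rho> k \<le> kth_zero n \<phi> k))
       \<and> (\<forall>l n (M::real). 1 \<le> l \<and> l \<le> n \<and> M \<noteq> 0 \<longrightarrow>
            (M > 0 \<longrightarrow> interlaces (zeros (Hphi (perturb l M \<phi>) n)) (zeros (Hphi \<phi> n))) \<and>
            (M < 0 \<longrightarrow> interlaces (zeros (Hphi \<phi> n)) (zeros (Hphi (perturb l M \<phi>) n))))"
proof (intro conjI allI impI)
  fix n
  show "Hphi \<phi> n \<noteq> 0" "card (zeros (Hphi \<phi> n)) = n"
    "\<forall>x\<in>zeros (Hphi \<phi> n). order x (Hphi \<phi> n) = 1" using part1 by blast+
  fix l :: nat assume "1 \<le> l"
  then show "interlaces (zeros (Hphi \<phi> (Suc n))) (zeros (Hphi (remove_at l \<phi>) n))"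
    by (rule part1_interlace)
next
  fix \<rho> :: "nat \<Rightarrow> real" and n k :: nat
  assume "\<forall>j\<ge>1. \<phi> j \<le> \<rho> j" "1 \<le> k \<and> k \<le> n"
  then show "kth_zero n \<rho> k \<le> kth_zero n \<phi> k" using part2 by blast
next
  fix l n :: nat and M :: real
  assume h: "1 \<le> l \<and> l \<le> n \<and> M \<noteq> 0"
  {
    assume "M > 0"
    then show "interlaces (zeros (Hphi (perturb l M \<phi>) n)) (zeros (Hphi \<phi> n))"
      using part3 h by blast
  next
    assume "M < 0"
    then have "interlaces (zeros (Hphi (perturb l (-M) (perturb l M \<phi>)) n)) (zeros (Hphi (perturb l M \<phi>) n))"
      using part3[of l n "-M" "perturb l M \<phi>"] h by simp
    then show "interlaces (zeros (Hphi \<phi> n)) (zeros (Hphi (perturb l M \<phi>) n))"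
      by (simp only: perturb_inv)
  }
qed

end
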